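(* Let $1>\delta_1>\delta_2>0$ with $\delta_2<0.5$, and let $c:\mathbb{Z}^2\to\{0,1\}$ be a deterministic function such that for all $x,n$ it is never the case that $c(x,n)=c(x+1,n)=1$. Let $Z(n)$, $n\ge0$, be the random walk on $\mathbb{Z}$ with $Z(0)=0$ and the following transitions: if $Z(n)=x$ and $c(x,n)=c(x-1,n)=0$ then $Z(n+1)=x$; if $c(x,n)=1$ then $Z(n+1)=x+1$ with probability $\delta_1$ and $Z(n+1)=x$ otherwise; if $c(x-1,n)=1$ then $Z(n+1)=x-1$ with probability $\delta_2$ and $Z(n+1)=x$ otherwise. Let $\theta:=\frac{\delta_1\wedge0.5-\delta_2}{\delta_1\wedge0.5+\delta_2}>0$. Then for all $n\ge0$ and all integers $k\ge0$, $$\mathbb{P}[Z(n)\le-k]\le\mathrm{e}^{-\theta k}.$$ *)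

theory Defs
  imports "HOL-Probability.Probability"
begin

text \<open>One step of the walk at time n from position x.  The environment
  c :: int => int => bool encodes c(x,n) = 1 as  c x n.\<close>
definition walk_step :: "(int \<Rightarrow> int \<Rightarrow> bool) \<Rightarrow> real \<Rightarrow> real \<Rightarrow> nat \<Rightarrow> int \<Rightarrow> int pmf" where
  "walk_step c d1 d2 n x =
     (if c x (int n) then map_pmf (\<lambda>b. if b then x + 1 else x) (bernoulli_pmf d1)
      else if c (x - 1) (int n) then map_pmf (\<lambda>b. if b then x - 1 else x) (bernoulli_pmf d2)
      else return_pmf x)"

primrec walk_dist :: "(int \<Rightarrow> int \<Rightarrow> bool) \<Rightarrow> real \<Rightarrow> real \<Rightarrow> nat \<Rightarrow> int pmf" where
  "walk_dist c d1 d2 0 = return_pmf 0"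
| "walk_dist c d1 d2 (Suc n) = bind_pmf (walk_dist c d1 d2 n) (walk_step c d1 d2 n)"

end

theory Submission
  imports Defs
begin


lemma prob_bind: "measure_pmf.prob (bind_pmf p f) A = (\<integral>x. measure_pmf.prob (f x) A \<partial>p)"
  unfolding measure_pmf_bind
  by (rule measure_pmf.measure_bind[where N="count_space UNIV"]) (auto simp: measure_pmf_in_subprob_algebra)

lemma step_prob:
  assumes "0 \<le> d1" "d1 \<le> 1" "0 \<le> d2" "d2 \<le> 1"
  shows "measure_pmf.prob (walk_step c d1 d2 n x) {z. z \<le> t} =
    (if c x (int n) then (if x + 1 \<le> t then 1 else if x \<le> t then 1 - d1 else 0)
     else if c (x - 1) (int n) then (if x \<le> t then 1 else if x - 1 \<le> t then d2 else 0)
     else if x \<le> t then 1 else 0)"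
proof -
  have b: "measure_pmf.prob (bernoulli_pmf d) {False} = 1 - d" "measure_pmf.prob (bernoulli_pmf d) {True} = d"
    if "0 \<le> d" "d \<le> 1" for d using that by (simp_all add: measure_pmf_single)
  have u: "measure_pmf.prob (bernoulli_pmf d) UNIV = 1" for d by simp
  have s: "Collect Not = {False}" "{x. x} = {True}" by auto
  show ?thesis
    unfolding walk_step_def using assms b[of d1] b[of d2]
    by (auto simp: vimage_def u indicator_def s)
qed

lemma intg: "(\<And>x. \<bar>f x\<bar> \<le> B) \<Longrightarrow> integrable (measure_pmf p) (f :: 'a \<Rightarrow> real)"
  by (rule measure_pmf.integrable_const_bound[where B=B]) auto

lemma key_ineq:
  fixes m d2 :: real
  assumes "0 < d2" "d2 < m"
  defines "\<theta> \<equiv> (m - d2) / (m + d2)"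
  shows "m * exp (-\<theta>) + d2 * exp \<theta> \<le> m + d2"
proof -
  have th: "0 < \<theta>" "\<theta> < 1" using assms by (auto simp: \<theta>_def field_simps)
  have "1 - \<theta> \<le> exp (-\<theta>)" using exp_ge_add_one_self[of "-\<theta>"] by simp
  moreover have "1 - \<theta> = 2 * d2 / (m + d2)" using assms by (simp add: \<theta>_def field_simps)
  ultimately have "2 * d2 / (m + d2) \<le> exp (-\<theta>)" by simp
  hence "2 * d2 / (m + d2) * exp \<theta> \<le> exp (-\<theta>) * exp \<theta>" by (rule mult_right_mono) simp
  hence "exp \<theta> * (2 * d2 / (m + d2)) \<le> 1" by (simp add: exp_minus field_simps)
  hence A: "exp \<theta> * (2 * d2) \<le> m + d2" using assms by (simp add: field_simps)
  have B0: "d2 * exp \<theta> = (exp \<theta> * (2 * d2)) / 2" by simp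
  have B: "d2 * exp \<theta> \<le> m" using A assms B0 by linarith
  define u where "u = exp \<theta>"
  have u1: "1 \<le> u" using th by (simp add: u_def)
  have "m * exp (-\<theta>) = m / u" by (simp add: u_def exp_minus field_simps)
  moreover have "m / u + d2 * u \<le> m + d2"
  proof -
    have "(u - 1) * (d2 * u - m) \<le> 0" using u1 B by (simp add: u_def mult_nonneg_nonpos)
    hence "m + d2 * u * u \<le> (m + d2) * u" by (simp add: algebra_simps)
    thus ?thesis using u1 by (simp add: field_simps)
  qed
  ultimately show ?thesis by (simp add: u_def)
qed

lemma step_bound:
  fixes m d1 d2 \<theta> :: real and p :: "int pmf"
  assumes "0 < d2" "d2 < m" "m \<le> d1" "d1 \<le> 1" "m + d2 \<le> 1"
    and th: "\<theta> = (m - d2) / (m + d2)"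
    and IH: "\<And>k. measure_pmf.prob p {z. z \<le> - int k} \<le> exp (- \<theta> * real k)"
  shows "measure_pmf.prob (bind_pmf p (walk_step c d1 d2 n)) {z. z \<le> - int k} \<le> exp (- \<theta> * real k)"
proof (cases k)
  case 0
  then show ?thesis by simp
next
  case (Suc j)
  let ?F = "\<lambda>k. measure_pmf.prob p {z. z \<le> - int k}"
  let ?I = "\<lambda>k. indicator {z. z \<le> - int k} :: int \<Rightarrow> real"
  let ?g = "\<lambda>x. measure_pmf.prob (walk_step c d1 d2 n x) {z. z \<le> - int k}"
  have sp: "?g x = (if c x (int n) then (if x + 1 \<le> - int k then 1 else if x \<le> - int k then 1 - d1 else 0)
     else if c (x - 1) (int n) then (if x \<le> - int k then 1 else if x - 1 \<le> - int k then d2 else 0)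
     else if x \<le> - int k then 1 else 0)" for x
    by (rule step_prob) (use assms in auto)
  have gi: "integrable p ?g" by (rule intg[where B=1]) simp
  have ii: "integrable p (?I k)" for k by (rule intg[where B=1]) (simp add: indicator_def)
  have eq: "measure_pmf.prob (bind_pmf p (walk_step c d1 d2 n)) {z. z \<le> - int k} = (\<integral>x. ?g x \<partial>p)"
    by (rule prob_bind)
  have FI: "(\<integral>x. ?I k x \<partial>p) = ?F k" for k by simp
  show ?thesis
  proof (cases "c (- int k) (int n)")
    case False
    have "(\<integral>x. ?g x \<partial>p) \<le> (\<integral>x. ?I k x \<partial>p)"
      proof (rule integral_mono[OF gi ii])
      fix x show "?g x \<le> ?I k x"
        by (cases "x = 1 - int k") (use False assms in \<open>auto simp: sp indicator_def\<close>)
    qed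
    then show ?thesis using eq FI IH[of k] by simp
  next
    case True
    let ?h = "\<lambda>x. (1 - m - d2) * ?I k x + m * ?I (Suc k) x + d2 * ?I j x"
    have "(\<integral>x. ?g x \<partial>p) \<le> (\<integral>x. ?h x \<partial>p)"
      proof (rule integral_mono[OF gi])
      show "integrable p ?h" by (rule intg[where B=2]) (use assms in \<open>auto simp: indicator_def\<close>)
      have hj: "- int j = - int k + 1" "- int (Suc k) = - int k - 1" using Suc by auto
      fix x show "?g x \<le> ?h x"
      proof -
        consider "x \<le> - int k - 1" | "x = - int k" | "x = - int k + 1" | "x \<ge> - int k + 2" by linarith
        then show ?thesis
          by cases (use True assms in \<open>auto simp: sp indicator_def hj\<close>)
      qed
    qed
    also have "(\<integral>x. ?h x \<partial>p) = (1 - m - d2) * ?F k + m * ?F (Suc k) + d2 * ?F j"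
    proof -
      have i1: "integrable p (\<lambda>x. (1 - m - d2) * ?I k x + m * ?I (Suc k) x)"
        by (rule intg[where B=2]) (use assms in \<open>auto simp: indicator_def\<close>)
      have i2: "integrable p (\<lambda>x. d2 * ?I j x)" "integrable p (\<lambda>x. (1 - m - d2) * ?I k x)"
        "integrable p (\<lambda>x. m * ?I (Suc k) x)"
        by (rule intg[where B=2]; use assms in \<open>auto simp: indicator_def\<close>)+
      show ?thesis
        unfolding Bochner_Integration.integral_add[OF i1 i2(1)] Bochner_Integration.integral_add[OF i2(2,3)]
        by (simp only: integral_mult_right_zero FI)
    qed
    also have "\<dots> \<le> (1 - m - d2) * exp (- \<theta> * real k) + m * exp (- \<theta> * real (Suc k)) + d2 * exp (- \<theta> * real j)"
      using assms by (intro add_mono mult_left_mono IH) auto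
    also have "\<dots> = exp (- \<theta> * real k) * ((1 - m - d2) + (m * exp (-\<theta>) + d2 * exp \<theta>))"
      using Suc by (simp add: algebra_simps exp_add[symmetric])
    also have "\<dots> \<le> exp (- \<theta> * real k) * ((1 - m - d2) + (m + d2))"
      using key_ineq[of d2 m] assms by (intro mult_left_mono add_left_mono) auto
    finally show ?thesis using eq by simp
  qed
qed


theorem lemmaA1:
  fixes c :: "int \<Rightarrow> int \<Rightarrow> bool" and d1 d2 :: real
  assumes "d1 < 1" and "d2 < d1" and "0 < d2" and "d2 < 1/2"
    and "\<And>x n. \<not> (c x n \<and> c (x + 1) n)"
  defines "\<theta> \<equiv> (min d1 (1/2) - d2) / (min d1 (1/2) + d2)"
  shows "\<theta> > 0 \<and> (\<forall>n k. measure_pmf.prob (walk_dist c d1 d2 n) {z. z \<le> - int k} \<le> exp (- \<theta> * real k))"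
proof
  let ?m = "min d1 (1/2)"
  have m: "0 < d2" "d2 < ?m" "?m \<le> d1" "d1 \<le> 1" "?m + d2 \<le> 1" using assms by auto
  show "\<theta> > 0" unfolding \<theta>_def using m(1,2) by (intro divide_pos_pos) linarith+
  show "\<forall>n k. measure_pmf.prob (walk_dist c d1 d2 n) {z. z \<le> - int k} \<le> exp (- \<theta> * real k)"
  proof (intro allI)
    fix n k
    show "measure_pmf.prob (walk_dist c d1 d2 n) {z. z \<le> - int k} \<le> exp (- \<theta> * real k)"
    proof (induction n arbitrary: k)
      case 0
      then show ?case by (simp add: indicator_def)
    next
      case (Suc n)
      show ?case unfolding walk_dist.simps
        by (rule step_bound[OF m _ Suc.IH]) (simp add: \<theta>_def)
    qed
  qed
qed

end
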